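(* Let $d\ge 1$, $\sigma_1>0$ and $q_1,\dots,q_d>0$, and put $q=\min_j q_j$. Let $\mu\in\mathbb{R}^d$ satisfy $|\mu(j)|\le q_j$ for every $j\in[d]$, let $e\sim\mathcal{N}(\mathbf{0},\sigma_1^2 I_d)$, and define the censored perturbed context $x\in\mathbb{R}^d$ coordinatewise by $$x(j)=\begin{cases}\mu(j)+e(j), & \text{if } |\mu(j)+e(j)|\le q_j,\\ q_j, & \text{if } \mu(j)+e(j)>q_j,\\ -q_j, & \text{if } \mu(j)+e(j)<-q_j.\end{cases}$$ Then $x$ has the perturbed diversity property with $\lambda_0=g\!\left(\tfrac{2q}{\sigma_1},0\right)\sigma_1^2$, i.e. $$\lambda_{\min}\!\left(\mathbb{E}_{e}\left[x x^{\top}\right]\right)\ \ge\ g\!\left(\tfrac{2q}{\sigma_1},0\right)\sigma_1^2 .$$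
   Context: $\lambda_{\min}(\cdot)$ denotes the smallest eigenvalue of a symmetric matrix. For real numbers $\alpha\le\beta$, $g(\beta,\alpha)$ denotes the variance of a standard normal variable censored to $[\alpha,\beta]$, i.e. $g(\beta,\alpha)=\mathrm{Var}\big(\max(\alpha,\min(\beta,Z))\big)$ with $Z\sim\mathcal{N}(0,1)$; equivalently, for $e\sim\mathcal{N}(0,\sigma_1^2)$, the variance of $e$ censored (clipped) to $[\alpha\sigma_1,\beta\sigma_1]$ equals $g(\beta,\alpha)\sigma_1^2$. (The paper expresses $g$ through an explicit formula in the standard normal density $\phi$ and distribution function $\Phi$.) *)

theory Defs
  imports "HOL-Probability.Probability"
begin

definition lambda_min :: "real^'n^'n \<Rightarrow> real" where
  "lambda_min A = Min {c. \<exists>v. v \<noteq> 0 \<and> A *v v = c *\<^sub>R v}"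

definition std_normal :: "real measure" where
  "std_normal = density lborel std_normal_density"

definition g :: "real \<Rightarrow> real \<Rightarrow> real" where
  "g beta alpha =
     (let c = (\<lambda>z. max alpha (min beta z)) in
      LINT z|std_normal. (c z - (LINT w|std_normal. c w))\<^sup>2)"

(* law of e ~ N(0, sigma1^2 I_d), coordinates indexed by the finite type 'n *)
definition gauss_vec :: "real \<Rightarrow> ('n::finite \<Rightarrow> real) measure" where
  "gauss_vec s = PiM UNIV (\<lambda>_. density lborel (normal_density 0 s))"

definition ctx :: "('n \<Rightarrow> real) \<Rightarrow> ('n \<Rightarrow> real) \<Rightarrow> ('n \<Rightarrow> real) \<Rightarrow> 'n \<Rightarrow> real" where
  "ctx q \<mu> e j = (if \<bar>\<mu> j + e j\<bar> \<le> q j then \<mu> j + e j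
                  else if \<mu> j + e j > q j then q j else - q j)"

end

theory Submission
  imports Defs "HOL-Real_Asymp.Real_Asymp"
begin


lemma sym_dot:
  fixes A :: "real^'n^'n"
  assumes "transpose A = A"
  shows "(A *v x) \<bullet> y = x \<bullet> (A *v y)"
proof -
  have "A *v x = x v* A" using vector_transpose_matrix[of x A] assms by simp
  then show ?thesis by (simp add: dot_lmul_matrix)
qed

lemma eig_orth:
  fixes A :: "real^'n^'n"
  assumes "transpose A = A" "A *v v = c *\<^sub>R v" "A *v w = d *\<^sub>R w" "c \<noteq> d"
  shows "v \<bullet> w = 0"
proof -
  have "c * (v \<bullet> w) = (A *v v) \<bullet> w" using assms by simp
  also have "\<dots> = v \<bullet> (A *v w)" by (rule sym_dot[OF assms(1)])
  also have "\<dots> = d * (v \<bullet> w)" using assms by simp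
  finally show ?thesis using assms(4) by simp
qed

lemma eig_finite:
  fixes A :: "real^'n^'n"
  assumes "transpose A = A"
  shows "finite {c. \<exists>v. v \<noteq> 0 \<and> A *v v = c *\<^sub>R v}"
proof -
  define S where "S = {c. \<exists>v. v \<noteq> 0 \<and> A *v v = c *\<^sub>R v}"
  define ev where "ev c = (SOME v. v \<noteq> 0 \<and> A *v v = c *\<^sub>R v)" for c
  have ev: "ev c \<noteq> 0 \<and> A *v ev c = c *\<^sub>R ev c" if "c \<in> S" for c
    using that unfolding S_def ev_def by (metis (mono_tags, lifting) mem_Collect_eq someI_ex)
  have inj: "inj_on ev S"
  proof (rule inj_onI)
    fix c d assume "c \<in> S" "d \<in> S" "ev c = ev d"
    then have "c *\<^sub>R ev c = d *\<^sub>R ev c" using ev by metis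
    then show "c = d" using ev \<open>c \<in> S\<close> by (simp add: scaleR_cancel_right)
  qed
  have "pairwise orthogonal (ev ` S)"
    unfolding pairwise_def orthogonal_def
    by (smt (verit) assms eig_orth ev image_iff)
  moreover have "0 \<notin> ev ` S" using ev by auto
  ultimately have "independent (ev ` S)" by (rule pairwise_orthogonal_independent)
  then have "finite (ev ` S)" using independent_bound by blast
  then show ?thesis using finite_imageD inj S_def by blast
qed

lemma eig_exists:
  fixes A :: "real^'n^'n"
  assumes sym: "transpose A = A"
  shows "\<exists>c v. v \<noteq> 0 \<and> A *v v = c *\<^sub>R v"
proof -
  define f where "f v = v \<bullet> (A *v v)" for v :: "real^'n"
  have cont: "continuous_on (sphere 0 1) f"
    unfolding f_def by (intro continuous_on_inner continuous_on_id matrix_vector_mult_linear_continuous_on)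
  have ne: "sphere (0::real^'n) 1 \<noteq> {}"
    using vector_choose_size[of 1] by auto
  obtain v0 where v0: "v0 \<in> sphere 0 1" and min: "\<And>u. u \<in> sphere 0 1 \<Longrightarrow> f v0 \<le> f u"
    using continuous_attains_inf[OF compact_sphere ne cont] by blast
  define l where "l = f v0"
  define B where "B x = A *v x - l *\<^sub>R x" for x
  have Badd: "B (x + y) = B x + B y" for x y
    unfolding B_def by (simp add: matrix_vector_right_distrib scaleR_right_distrib)
  have Bscale: "B (c *\<^sub>R x) = c *\<^sub>R B x" for c x
    unfolding B_def by (simp add: matrix_vector_mult_scaleR scaleR_right_diff_distrib)
  have symB: "(B x) \<bullet> y = x \<bullet> (B y)" for x y
    unfolding B_def by (simp add: inner_diff_left inner_diff_right sym_dot[OF sym])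
  have psd: "x \<bullet> (B x) \<ge> 0" for x
  proof (cases "x = 0")
    case True then show ?thesis by (simp add: B_def)
  next
    case False
    define u where "u = (1 / norm x) *\<^sub>R x"
    have "u \<in> sphere 0 1" using False by (simp add: u_def)
    then have "l \<le> f u" using min l_def by simp
    moreover have "f u = (x \<bullet> (A *v x)) / (norm x)^2"
      unfolding f_def u_def by (simp add: matrix_vector_mult_scaleR power2_eq_square)
    ultimately have "l * (norm x)^2 \<le> x \<bullet> (A *v x)"
      using False by (simp add: pos_le_divide_eq)
    then show ?thesis by (simp add: B_def inner_diff_right power2_norm_eq_inner)
  qed
  have v0z: "v0 \<bullet> (B v0) = 0"
  proof -
    have "v0 \<bullet> v0 = 1" using v0 by (simp add: power2_norm_eq_inner[symmetric])
    then show ?thesis by (simp add: B_def inner_diff_right l_def f_def)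
  qed
  define w where "w = B v0"
  define p where "p = w \<bullet> w"
  define K where "K = w \<bullet> (B w) + 1"
  have K: "K > 0" using psd[of w] K_def by simp
  define t where "t = - p / K"
  have e1: "(v0 + t *\<^sub>R w) \<bullet> (B (v0 + t *\<^sub>R w)) = v0 \<bullet> B v0 + t * (w \<bullet> B v0) + t * (v0 \<bullet> B w) + t * t * (w \<bullet> B w)"
    by (simp add: Badd Bscale inner_add_left inner_add_right algebra_simps)
  have "v0 \<bullet> B w = w \<bullet> B v0" using symB[of w v0] by (simp add: inner_commute)
  then have "(v0 + t *\<^sub>R w) \<bullet> (B (v0 + t *\<^sub>R w)) = 2 * t * p + t^2 * (K - 1)"
    unfolding e1 v0z by (simp add: p_def K_def w_def power2_eq_square)
  then have h: "0 \<le> 2 * t * p + t^2 * (K - 1)" using psd by metis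
  have "2 * t * p + t^2 * (K - 1) = - (p^2 / K) - p^2 / K^2" using K
    by (simp add: t_def power2_eq_square field_simps)
  with h have "0 \<le> - (p^2 / K) - p^2 / K^2" by simp
  moreover have "p^2 / K \<ge> 0" "p^2/K^2 \<ge> 0" using K by auto
  ultimately have "p^2 / K = 0" by linarith
  then have "p = 0" using K by simp
  then have "w = 0" by (simp add: p_def)
  then have "A *v v0 = l *\<^sub>R v0" by (simp add: w_def B_def)
  moreover have "v0 \<noteq> 0" using v0 by auto
  ultimately show ?thesis by blast
qed

lemma lambda_min_ge:
  fixes A :: "real^'n^'n"
  assumes sym: "transpose A = A"
    and Q: "\<And>v. v \<bullet> (A *v v) \<ge> l * (v \<bullet> v)"
  shows "lambda_min A \<ge> l"
proof -
  let ?S = "{c. \<exists>v. v \<noteq> 0 \<and> A *v v = c *\<^sub>R v}"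
  have fin: "finite ?S" by (rule eig_finite[OF sym])
  have ne: "?S \<noteq> {}" using eig_exists[OF sym] by blast
  have le: "l \<le> c" if "c \<in> ?S" for c
  proof -
    from that have "\<exists>v. v \<noteq> 0 \<and> A *v v = c *\<^sub>R v" by (simp only: mem_Collect_eq)
    then obtain v where v: "v \<noteq> 0" "A *v v = c *\<^sub>R v" by (elim exE conjE)
    have "v \<bullet> (A *v v) = c * (v \<bullet> v)" using v(2) by simp
    then have "l * (v \<bullet> v) \<le> c * (v \<bullet> v)" using Q[of v] by linarith
    moreover have "v \<bullet> v > 0" using v by simp
    ultimately show ?thesis by (meson mult_le_cancel_right_pos)
  qed
  have "l \<le> Min ?S" using Min_ge_iff[OF fin ne] le by blast
  then show ?thesis unfolding lambda_min_def .
qed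



abbreviation phi :: "real \<Rightarrow> real" where "phi \<equiv> std_normal_density"

definition Phi :: "real \<Rightarrow> real" where
  "Phi x = (LBINT t=-\<infinity>..ereal x. phi t)"

lemma phi_eq: "phi = (\<lambda>x. (1 / sqrt (2 * pi)) * exp (- x\<^sup>2 / 2))"
  by (rule ext) (simp add: std_normal_density_def)

lemma phi_deriv: "(phi has_real_derivative (- x * phi x)) (at x)"
proof -
  have "((\<lambda>x. exp (- x\<^sup>2 / 2)) has_real_derivative (exp (- x\<^sup>2 / 2) * (- x))) (at x)"
    by (auto intro!: derivative_eq_intros simp: power2_eq_square)
  from DERIV_cmult[OF this, of "1 / sqrt (2 * pi)"] show ?thesis
    unfolding phi_eq by (simp add: mult_ac)
qed

lemma phi_cont: "continuous_on S phi"
  unfolding phi_eq by (intro continuous_intros) auto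

lemma phi_pos: "phi x > 0"
  by (rule normal_density_pos) simp

lemma phi_even: "phi (- x) = phi x"
  unfolding phi_eq by simp

lemma phi_int: "interval_lebesgue_integrable lborel a b phi"
proof -
  have "integrable lborel (\<lambda>x. indicat_real A x * phi x)" if "A \<in> sets borel" for A
    using integrable_real_mult_indicator[of A lborel phi] that by (simp add: mult_ac)
  then show ?thesis
    unfolding interval_lebesgue_integrable_def set_integrable_def by auto
qed

lemma Phi_diff: "Phi y - Phi x = (LBINT t=ereal x..ereal y. phi t)"
proof -
  have "(LBINT t=-\<infinity>..ereal x. phi t) + (LBINT t=ereal x..ereal y. phi t) = (LBINT t=-\<infinity>..ereal y. phi t)"
    by (rule interval_integral_sum) (rule phi_int)
  then show ?thesis unfolding Phi_def by simp
qed

lemma Phi_deriv: "(Phi has_real_derivative phi x) (at x)"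
proof -
  have eq: "Phi u = Phi (x - 1) + (LBINT t=ereal (x-1)..ereal u. phi t)" for u
    using Phi_diff[of u "x - 1"] by simp
  have "((\<lambda>u. LBINT t=(x-1)..u. phi t) has_vector_derivative phi x) (at x within {x-1..x+1})"
    by (rule interval_integral_FTC2) (auto intro: phi_cont)
  then have "((\<lambda>u. LBINT t=(x-1)..u. phi t) has_vector_derivative phi x) (at x)"
    by (subst (asm) at_within_interior) auto
  then have "((\<lambda>u. Phi (x - 1) + (LBINT t=(x-1)..u. phi t)) has_real_derivative phi x) (at x)"
    by (auto intro!: derivative_eq_intros simp: has_real_derivative_iff_has_vector_derivative)
  moreover have "Phi = (\<lambda>u. Phi (x - 1) + (LBINT t=(x-1)..u. phi t))"
    by (intro ext) (rule eq)
  ultimately show ?thesis by simp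
qed

lemma Phi_cont: "continuous_on S Phi"
  using Phi_deriv by (meson DERIV_isCont continuous_at_imp_continuous_on)

lemma Phi_nonneg: "Phi x \<ge> 0"
  unfolding Phi_def interval_lebesgue_integral_def set_lebesgue_integral_def
  by (auto intro!: Bochner_Integration.integral_nonneg simp: indicator_def)

lemma Phi_mono_strict: "x < y \<Longrightarrow> Phi x < Phi y"
  using DERIV_pos_imp_increasing[of x y Phi] Phi_deriv phi_pos by blast

lemma Phi_pos: "Phi x > 0"
  using Phi_mono_strict[of "x - 1" x] Phi_nonneg[of "x - 1"] by simp

lemma phi_total: "(LBINT t=-\<infinity>..\<infinity>. phi t) = 1"
  unfolding interval_lebesgue_integral_def set_lebesgue_integral_def by simp

lemma Phi_neg: "Phi (- x) = 1 - Phi x"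
proof -
  have "(LBINT t=-\<infinity>..ereal x. phi t) + (LBINT t=ereal x..\<infinity>. phi t) = (LBINT t=-\<infinity>..\<infinity>. phi t)"
    by (rule interval_integral_sum) (rule phi_int)
  then have 1: "Phi x + (LBINT t=ereal x..\<infinity>. phi t) = 1" unfolding Phi_def phi_total .
  have "(LBINT t=ereal x..\<infinity>. phi t) = (LBINT t=-\<infinity>..-ereal x. phi (- t))"
    by (subst interval_integral_reflect) simp
  also have "\<dots> = Phi (- x)" unfolding Phi_def phi_even by simp
  finally show ?thesis using 1 by simp
qed

lemma phi_lim_bot: "(phi \<longlongrightarrow> 0) at_bot"
  unfolding phi_eq by real_asymp

lemma mills_aux:
  assumes "x \<le> 0"
  shows "(LBINT t=-\<infinity>..ereal x. - t * phi t) = phi x"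
    "set_integrable lborel (einterval (-\<infinity>) (ereal x)) (\<lambda>t. - t * phi t)"
proof -
  have p1: "- \<infinity> < ereal x" by simp
  have p2: "DERIV phi t :> - t * phi t" for t by (rule phi_deriv)
  have p3: "isCont (\<lambda>t. - t * phi t) t" for t unfolding phi_eq by (intro continuous_intros) auto
  have p4: "AE t in lborel. - \<infinity> < ereal t \<longrightarrow> ereal t < ereal x \<longrightarrow> 0 \<le> - t * phi t"
    using assms phi_pos by (auto intro!: AE_I2 simp: mult_nonpos_nonneg less_imp_le)
  have p5: "((phi \<circ> real_of_ereal) \<longlongrightarrow> 0) (at_right (- \<infinity>))"
    unfolding ereal_tendsto_simps by (rule phi_lim_bot)
  have p6: "((phi \<circ> real_of_ereal) \<longlongrightarrow> phi x) (at_left (ereal x))"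
    unfolding ereal_tendsto_simps using phi_deriv[of x]
    by (meson DERIV_isCont isCont_def tendsto_within_subset subset_UNIV filterlim_at_split)
  note r = interval_integral_FTC_nonneg[OF p1 p2 p3 p4 p5 p6]
  from r show "(LBINT t=-\<infinity>..ereal x. - t * phi t) = phi x" by simp
  from r show "set_integrable lborel (einterval (-\<infinity>) (ereal x)) (\<lambda>t. - t * phi t)" by simp
qed

lemma mills:
  assumes "x < 0"
  shows "Phi x \<le> phi x / (- x)"
proof -
  have "Phi x = (LINT t:einterval (-\<infinity>) (ereal x)|lborel. phi t)"
    unfolding Phi_def interval_lebesgue_integral_def by simp
  also have "\<dots> \<le> (LINT t:einterval (-\<infinity>) (ereal x)|lborel. (- t * phi t) / (- x))"
  proof (rule set_integral_mono)
    show "set_integrable lborel (einterval (- \<infinity>) (ereal x)) phi"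
      using phi_int[of "-\<infinity>" "ereal x"] unfolding interval_lebesgue_integrable_def by simp
    show "set_integrable lborel (einterval (- \<infinity>) (ereal x)) (\<lambda>t. - t * phi t / - x)"
      using mills_aux(2)[of x] assms by (intro set_integrable_divide) auto
    fix t assume "t \<in> einterval (- \<infinity>) (ereal x)"
    then have "t < x" by simp
    then have "1 \<le> - t / - x" using assms by (simp add: field_simps)
    then have "1 * phi t \<le> (- t / - x) * phi t" using phi_pos[of t] by (intro mult_right_mono) auto
    then show "phi t \<le> - t * phi t / - x" by simp
  qed
  also have "\<dots> = (LINT t:einterval (-\<infinity>) (ereal x)|lborel. - t * phi t) / (- x)"
    by (rule set_integral_divide_zero)
  also have "\<dots> = phi x / (- x)"
    using mills_aux(1)[of x] assms unfolding interval_lebesgue_integral_def by simp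
  finally show ?thesis .
qed

definition H :: "real \<Rightarrow> real" where "H x = x * Phi x + phi x"

lemma H_nonneg: "H x \<ge> 0"
proof (cases "x < 0")
  case True
  then have "Phi x \<le> phi x / (- x)" by (rule mills)
  then have "(- x) * Phi x \<le> phi x" using True by (simp add: field_simps)
  then show ?thesis unfolding H_def by simp
next
  case False
  then show ?thesis unfolding H_def using Phi_nonneg[of x] phi_pos[of x] by simp
qed

lemma H_deriv: "(H has_real_derivative Phi x) (at x)"
  unfolding H_def by (auto intro!: derivative_eq_intros Phi_deriv phi_deriv)


lemma incr_by_deriv:
  fixes f f' :: "real \<Rightarrow> real"
  assumes "a \<le> b" "\<And>x. (f has_real_derivative f' x) (at x)" "\<And>x. a \<le> x \<Longrightarrow> x \<le> b \<Longrightarrow> f' x \<ge> 0"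
  shows "f a \<le> f b"
proof (rule DERIV_nonneg_imp_increasing_open[OF assms(1)])
  show "\<exists>y. (f has_real_derivative y) (at x) \<and> 0 \<le> y" if "a < x" "x < b" for x
    using assms that by force
  show "continuous_on {a..b} f"
    using assms(2) by (meson DERIV_isCont continuous_at_imp_continuous_on)
qed

lemma phi_ne0: "phi x \<noteq> 0" using phi_pos[of x] by simp
lemma Phi_ne0: "Phi x \<noteq> 0" using Phi_pos[of x] by simp

lemma r_mono:
  assumes "x \<le> y"
  shows "Phi x / phi x \<le> Phi y / phi y"
proof (rule incr_by_deriv[OF assms, where f' = "\<lambda>t. H t / phi t"])
  fix t
  show "((\<lambda>t. Phi t / phi t) has_real_derivative H t / phi t) (at t)"
    using phi_ne0[of t]
    by (auto intro!: derivative_eq_intros Phi_deriv phi_deriv simp: H_def power2_eq_square field_simps)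
  show "0 \<le> H t / phi t" using H_nonneg[of t] phi_pos[of t] by simp
qed

lemma cross:
  assumes "x \<le> y"
  shows "Phi x * phi y \<le> Phi y * phi x"
  using r_mono[OF assms] phi_pos[of x] phi_pos[of y] by (simp add: field_simps)

lemma D_nonneg:
  assumes "0 \<le> l"
  shows "(H (x + l) - H x) * phi x - (Phi (x + l) - Phi x) * Phi x \<ge> 0"
proof -
  have "(\<lambda>l. (H (x + l) - H x) * phi x - (Phi (x + l) - Phi x) * Phi x) 0
      \<le> (\<lambda>l. (H (x + l) - H x) * phi x - (Phi (x + l) - Phi x) * Phi x) l"
  proof (rule incr_by_deriv[OF assms, where f' = "\<lambda>l. Phi (x + l) * phi x - phi (x + l) * Phi x"])
    fix t
    show "((\<lambda>l. (H (x + l) - H x) * phi x - (Phi (x + l) - Phi x) * Phi x) has_real_derivative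
        Phi (x + t) * phi x - phi (x + t) * Phi x) (at t)"
      by (auto intro!: derivative_eq_intros H_deriv[THEN DERIV_chain2] Phi_deriv[THEN DERIV_chain2])
    assume "0 \<le> t"
    then show "0 \<le> Phi (x + t) * phi x - phi (x + t) * Phi x"
      using cross[of x "x + t"] by (simp add: mult.commute)
  qed
  then show ?thesis by simp
qed

definition G :: "real \<Rightarrow> real \<Rightarrow> real" where "G l x = (H (x + l) - H x) / Phi x"

lemma G_anti:
  assumes "0 \<le> l" "x \<le> y"
  shows "G l y \<le> G l x"
proof -
  have "(\<lambda>t. - G l t) x \<le> (\<lambda>t. - G l t) y"
  proof (rule incr_by_deriv[OF assms(2), where f' = "\<lambda>t. ((H (t + l) - H t) * phi t - (Phi (t + l) - Phi t) * Phi t) / (Phi t)^2"])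
    fix t
    show "((\<lambda>t. - G l t) has_real_derivative ((H (t + l) - H t) * phi t - (Phi (t + l) - Phi t) * Phi t) / (Phi t)^2) (at t)"
      unfolding G_def using Phi_ne0[of t]
      by (auto intro!: derivative_eq_intros H_deriv[THEN DERIV_chain2] Phi_deriv simp: power2_eq_square field_simps)
    show "0 \<le> ((H (t + l) - H t) * phi t - (Phi (t + l) - Phi t) * Phi t) / (Phi t)^2"
      using D_nonneg[OF assms(1), of t] by simp
  qed
  then show ?thesis by simp
qed


definition Mf :: "real \<Rightarrow> real \<Rightarrow> real" where
  "Mf a b = a * Phi a + b * (1 - Phi b) + phi a - phi b"
definition Sf :: "real \<Rightarrow> real \<Rightarrow> real" where
  "Sf a b = a\<^sup>2 * Phi a + b\<^sup>2 * (1 - Phi b) + a * phi a - b * phi b + Phi b - Phi a"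
definition Vf :: "real \<Rightarrow> real \<Rightarrow> real" where
  "Vf a b = Sf a b - (Mf a b)\<^sup>2"

lemma M_deriv: "((\<lambda>c. Mf c (c + L)) has_real_derivative (Phi c + 1 - Phi (c + L))) (at c)"
  unfolding Mf_def
  by (auto intro!: derivative_eq_intros Phi_deriv[THEN DERIV_chain2] phi_deriv[THEN DERIV_chain2]
       Phi_deriv phi_deriv simp: algebra_simps)

lemma S_deriv: "((\<lambda>c. Sf c (c + L)) has_real_derivative (2 * c * Phi c + 2 * (c + L) * (1 - Phi (c + L)))) (at c)"
  unfolding Sf_def
  by (auto intro!: derivative_eq_intros Phi_deriv[THEN DERIV_chain2] phi_deriv[THEN DERIV_chain2]
       Phi_deriv phi_deriv simp: algebra_simps power2_eq_square)

lemma W_deriv: "((\<lambda>c. Vf c (c + L)) has_real_derivative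
   (2 * c * Phi c + 2 * (c + L) * (1 - Phi (c + L)) - 2 * Mf c (c + L) * (Phi c + 1 - Phi (c + L)))) (at c)"
  unfolding Vf_def
  by (auto intro!: derivative_eq_intros S_deriv M_deriv simp: algebra_simps)

lemma H_neg: "H (- y) = H y - y"
  unfolding H_def by (simp add: Phi_neg phi_even algebra_simps)

lemma W_deriv_sign:
  assumes "0 \<le> L" "- L / 2 \<le> c"
  shows "2 * c * Phi c + 2 * (c + L) * (1 - Phi (c + L)) - 2 * Mf c (c + L) * (Phi c + 1 - Phi (c + L)) \<le> 0"
proof -
  define a where "a = c"
  define b where "b = c + L"
  define P where "P = Phi a"
  define Q where "Q = 1 - Phi b"
  define I where "I = H b - H a"
  have P: "P > 0" using Phi_pos unfolding P_def by simp
  have Q: "Q > 0" using Phi_pos[of "-b"] unfolding Q_def Phi_neg by simp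
  have bm: "b - Mf a b = I" unfolding Mf_def I_def H_def by (simp add: algebra_simps)
  have "- b \<le> a" using assms unfolding a_def b_def by simp
  from G_anti[OF assms(1) this] have "G L a \<le> G L (- b)" .
  moreover have "G L a = I / P" unfolding G_def I_def P_def b_def a_def by simp
  moreover have "G L (- b) = (L - I) / Q"
  proof -
    have "- b + L = - a" unfolding a_def b_def by simp
    then have "G L (- b) = (H (- a) - H (- b)) / Phi (- b)" unfolding G_def by simp
    also have "\<dots> = (L - I) / Q" unfolding H_neg Phi_neg Q_def I_def b_def a_def by simp
    finally show ?thesis .
  qed
  ultimately have "I / P \<le> (L - I) / Q" by simp
  then have key: "I * Q \<le> (L - I) * P" using P Q by (simp add: field_simps)
  have "2 * c * Phi c + 2 * (c + L) * (1 - Phi (c + L)) - 2 * Mf c (c + L) * (Phi c + 1 - Phi (c + L))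
      = 2 * (P * (a - Mf a b) + Q * (b - Mf a b))"
    unfolding P_def Q_def a_def b_def by (simp add: algebra_simps)
  also have "\<dots> = 2 * (P * (I - L) + Q * I)"
  proof -
    have mI: "Mf a b = b - I" using bm by simp
    show ?thesis unfolding mI by (simp add: algebra_simps b_def a_def)
  qed
  also have "\<dots> \<le> 0" using key by (simp add: algebra_simps)
  finally show ?thesis .
qed

lemma W_mono:
  assumes "0 \<le> L" "- L / 2 \<le> c" "c \<le> 0"
  shows "Vf 0 L \<le> Vf c (c + L)"
proof -
  have "(\<lambda>c. - Vf c (c + L)) c \<le> (\<lambda>c. - Vf c (c + L)) 0"
  proof (rule incr_by_deriv[OF assms(3)])
    fix x
    show "((\<lambda>c. - Vf c (c + L)) has_real_derivative
      - (2 * x * Phi x + 2 * (x + L) * (1 - Phi (x + L)) - 2 * Mf x (x + L) * (Phi x + 1 - Phi (x + L)))) (at x)"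
      by (intro DERIV_minus W_deriv)
    assume "c \<le> x"
    then show "0 \<le> - (2 * x * Phi x + 2 * (x + L) * (1 - Phi (x + L)) - 2 * Mf x (x + L) * (Phi x + 1 - Phi (x + L)))"
      using W_deriv_sign[OF assms(1), of x] assms by simp
  qed
  then show ?thesis by simp
qed

lemma Vf_sym: "Vf (- b) (- a) = Vf a b"
proof -
  have "Mf (- b) (- a) = - Mf a b" unfolding Mf_def by (simp add: Phi_neg phi_even algebra_simps)
  moreover have "Sf (- b) (- a) = Sf a b" unfolding Sf_def by (simp add: Phi_neg phi_even algebra_simps)
  ultimately show ?thesis unfolding Vf_def by simp
qed

lemma core_ineq:
  assumes "0 \<le> L" "- L \<le> c" "c \<le> 0"
  shows "Vf 0 L \<le> Vf c (c + L)"
proof (cases "- L / 2 \<le> c")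
  case True then show ?thesis using W_mono assms by blast
next
  case False
  have "Vf 0 L \<le> Vf (- L - c) (- L - c + L)" using W_mono[OF assms(1), of "- L - c"] False assms by simp
  also have "\<dots> = Vf (- (c + L)) (- c)"
  proof -
    have "- L - c = - (c + L)" "- L - c + L = - c" by simp_all
    then show ?thesis by metis
  qed
  also have "\<dots> = Vf c (c + L)" by (rule Vf_sym)
  finally show ?thesis .
qed


definition clamp :: "real \<Rightarrow> real \<Rightarrow> real \<Rightarrow> real" where
  "clamp a b z = max a (min b z)"

lemma clamp_meas[measurable]: "clamp a b \<in> borel_measurable borel"
  unfolding clamp_def by measurable

lemma std_normal_prob: "prob_space std_normal"
  unfolding std_normal_def by (rule prob_space_normal_density) simp

lemma Phi_tail: "(LBINT t=ereal x..\<infinity>. phi t) = 1 - Phi x"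
proof -
  have "(LBINT t=-\<infinity>..ereal x. phi t) + (LBINT t=ereal x..\<infinity>. phi t) = (LBINT t=-\<infinity>..\<infinity>. phi t)"
    by (rule interval_integral_sum) (rule phi_int)
  then show ?thesis unfolding Phi_def phi_total by simp
qed

lemma int_std:
  assumes "f \<in> borel_measurable borel"
  shows "integral\<^sup>L std_normal f = (LBINT z=-\<infinity>..\<infinity>. phi z * f z)"
  unfolding std_normal_def
  by (subst integral_density) (auto simp: assms interval_lebesgue_integral_def set_lebesgue_integral_def)

lemma int_bounded:
  assumes "f \<in> borel_measurable borel" "\<And>z. \<bar>f z\<bar> \<le> K"
  shows "integrable std_normal f" "integrable lborel (\<lambda>z. phi z * f z)"
proof -
  interpret prob_space std_normal by (rule std_normal_prob)
  show i: "integrable std_normal f"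
    using assms by (intro integrable_const_bound[where B = K]) (auto simp: std_normal_def)
  then show "integrable lborel (\<lambda>z. phi z * f z)"
    unfolding std_normal_def using assms by (subst (asm) integrable_density) auto
qed

lemma interval_int_of_int:
  assumes "integrable lborel (F :: real \<Rightarrow> real)"
  shows "interval_lebesgue_integrable lborel a b F"
proof -
  have "integrable lborel (\<lambda>x. indicat_real A x * F x)" if "A \<in> sets borel" for A
    using integrable_real_mult_indicator[of A lborel F] that assms by (simp add: mult_ac)
  then show ?thesis
    unfolding interval_lebesgue_integrable_def set_integrable_def by auto
qed

lemma split3:
  assumes "integrable lborel (F :: real \<Rightarrow> real)" "a \<le> b"
  shows "(LBINT z=-\<infinity>..\<infinity>. F z) = (LBINT z=-\<infinity>..ereal a. F z) + (LBINT z=ereal a..ereal b. F z) + (LBINT z=ereal b..\<infinity>. F z)"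
proof -
  have 1: "(LBINT z=-\<infinity>..ereal a. F z) + (LBINT z=ereal a..\<infinity>. F z) = (LBINT z=-\<infinity>..\<infinity>. F z)"
    by (rule interval_integral_sum) (rule interval_int_of_int[OF assms(1)])
  have 2: "(LBINT z=ereal a..ereal b. F z) + (LBINT z=ereal b..\<infinity>. F z) = (LBINT z=ereal a..\<infinity>. F z)"
    by (rule interval_integral_sum) (rule interval_int_of_int[OF assms(1)])
  from 1 2 show ?thesis by simp
qed

lemma FTC_real:
  assumes "a \<le> b" "\<And>x. (F has_real_derivative f x) (at x)" "continuous_on {a..b} f"
  shows "(LBINT x=ereal a..ereal b. f x) = F b - F a"
proof (rule interval_integral_FTC_finite)
  show "continuous_on {min a b..max a b} f" using assms by simp
  fix x show "(F has_vector_derivative f x) (at x within {min a b..max a b})"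
    using assms(2)[of x] by (simp add: has_real_derivative_iff_has_vector_derivative has_vector_derivative_at_within)
qed

lemma E_clamp:
  assumes "a \<le> b"
  shows "integral\<^sup>L std_normal (clamp a b) = Mf a b"
proof -
  have bnd: "\<bar>clamp a b z\<bar> \<le> \<bar>a\<bar> + \<bar>b\<bar>" for z unfolding clamp_def by auto
  have "integral\<^sup>L std_normal (clamp a b) = (LBINT z=-\<infinity>..\<infinity>. phi z * clamp a b z)"
    by (rule int_std) simp
  also have "\<dots> = (LBINT z=-\<infinity>..ereal a. phi z * clamp a b z) + (LBINT z=ereal a..ereal b. phi z * clamp a b z)
       + (LBINT z=ereal b..\<infinity>. phi z * clamp a b z)"
    by (rule split3[OF int_bounded(2)[OF clamp_meas bnd] assms])
  also have "(LBINT z=-\<infinity>..ereal a. phi z * clamp a b z) = (LBINT z=-\<infinity>..ereal a. a * phi z)"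
    by (rule interval_integral_cong) (use assms in \<open>auto simp: clamp_def einterval_def\<close>)
  also have "\<dots> = a * Phi a" unfolding Phi_def by simp
  also have "(LBINT z=ereal a..ereal b. phi z * clamp a b z) = (LBINT z=ereal a..ereal b. z * phi z)"
    by (rule interval_integral_cong) (use assms in \<open>auto simp: clamp_def einterval_def\<close>)
  also have "\<dots> = (- phi b) - (- phi a)"
    by (rule FTC_real[OF assms]) (auto intro!: derivative_eq_intros phi_deriv continuous_intros phi_cont)
  also have "(LBINT z=ereal b..\<infinity>. phi z * clamp a b z) = (LBINT z=ereal b..\<infinity>. b * phi z)"
    by (rule interval_integral_cong) (use assms in \<open>auto simp: clamp_def einterval_def\<close>)
  also have "\<dots> = b * (1 - Phi b)" using Phi_tail by simp
  finally show ?thesis unfolding Mf_def by simp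
qed

lemma E_clamp2:
  assumes "a \<le> b"
  shows "integral\<^sup>L std_normal (\<lambda>z. (clamp a b z)\<^sup>2) = Sf a b"
proof -
  have c: "\<bar>clamp a b z\<bar> \<le> \<bar>a\<bar> + \<bar>b\<bar>" for z unfolding clamp_def by auto
  have bnd: "\<bar>(clamp a b z)\<^sup>2\<bar> \<le> (\<bar>a\<bar> + \<bar>b\<bar>)\<^sup>2" for z
    using power_mono[OF c abs_ge_zero, of z 2] by simp
  have "integral\<^sup>L std_normal (\<lambda>z. (clamp a b z)\<^sup>2) = (LBINT z=-\<infinity>..\<infinity>. phi z * (clamp a b z)\<^sup>2)"
    by (rule int_std) simp
  also have "\<dots> = (LBINT z=-\<infinity>..ereal a. phi z * (clamp a b z)\<^sup>2) + (LBINT z=ereal a..ereal b. phi z * (clamp a b z)\<^sup>2)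
       + (LBINT z=ereal b..\<infinity>. phi z * (clamp a b z)\<^sup>2)"
    by (rule split3[OF int_bounded(2)[OF _ bnd] assms]) simp
  also have "(LBINT z=-\<infinity>..ereal a. phi z * (clamp a b z)\<^sup>2) = (LBINT z=-\<infinity>..ereal a. a\<^sup>2 * phi z)"
    by (rule interval_integral_cong) (use assms in \<open>auto simp: clamp_def einterval_def\<close>)
  also have "\<dots> = a\<^sup>2 * Phi a" unfolding Phi_def by simp
  also have "(LBINT z=ereal a..ereal b. phi z * (clamp a b z)\<^sup>2) = (LBINT z=ereal a..ereal b. z\<^sup>2 * phi z)"
    by (rule interval_integral_cong) (use assms in \<open>auto simp: clamp_def einterval_def\<close>)
  also have "\<dots> = (Phi b - b * phi b) - (Phi a - a * phi a)"
    by (rule FTC_real[OF assms])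
      (auto intro!: derivative_eq_intros phi_deriv Phi_deriv continuous_intros phi_cont simp: power2_eq_square algebra_simps)
  also have "(LBINT z=ereal b..\<infinity>. phi z * (clamp a b z)\<^sup>2) = (LBINT z=ereal b..\<infinity>. b\<^sup>2 * phi z)"
    by (rule interval_integral_cong) (use assms in \<open>auto simp: clamp_def einterval_def\<close>)
  also have "\<dots> = b\<^sup>2 * (1 - Phi b)" using Phi_tail by simp
  finally show ?thesis unfolding Sf_def by simp
qed


definition vr :: "real measure \<Rightarrow> (real \<Rightarrow> real) \<Rightarrow> real" where
  "vr M f = integral\<^sup>L M (\<lambda>x. (f x)\<^sup>2) - (integral\<^sup>L M f)\<^sup>2"

lemma sq_bounded':
  fixes x K :: real
  assumes "\<bar>x\<bar> \<le> K"
  shows "\<bar>x\<^sup>2\<bar> \<le> K\<^sup>2"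
proof -
  have "\<bar>x\<bar>^2 \<le> K^2" using power_mono[OF assms abs_ge_zero, of 2] by simp
  then show ?thesis by simp
qed

lemma sq_bounded:
  assumes "\<And>z. \<bar>f z\<bar> \<le> (K::real)"
  shows "\<bar>(f z)\<^sup>2\<bar> \<le> K\<^sup>2"
  using sq_bounded'[OF assms] .

lemma vr_shift:
  assumes [measurable]: "f \<in> borel_measurable borel" and b: "\<And>z. \<bar>f z\<bar> \<le> K"
  shows "integral\<^sup>L std_normal (\<lambda>z. (f z - t)\<^sup>2) = vr std_normal f + (integral\<^sup>L std_normal f - t)\<^sup>2"
proof -
  interpret prob_space std_normal by (rule std_normal_prob)
  have i1: "integrable std_normal f" by (rule int_bounded(1)[OF assms])
  have i2: "integrable std_normal (\<lambda>z. (f z)\<^sup>2)" by (rule int_bounded(1)[OF _ sq_bounded[OF b]]) simp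
  have "(\<lambda>z. (f z - t)\<^sup>2) = (\<lambda>z. (f z)\<^sup>2 - 2 * t * f z + t\<^sup>2)"
    by (simp add: power2_eq_square algebra_simps)
  then have "integral\<^sup>L std_normal (\<lambda>z. (f z - t)\<^sup>2) = integral\<^sup>L std_normal (\<lambda>z. (f z)\<^sup>2) - 2 * t * integral\<^sup>L std_normal f + t\<^sup>2"
    using i1 i2 by (simp add: prob_space)
  then show ?thesis unfolding vr_def by (simp add: power2_eq_square algebra_simps)
qed

lemma vr_le_shift:
  assumes "f \<in> borel_measurable borel" "\<And>z. \<bar>f z\<bar> \<le> K"
  shows "vr std_normal f \<le> integral\<^sup>L std_normal (\<lambda>z. (f z - t)\<^sup>2)"
  using vr_shift[OF assms, of t] by simp

lemma clamp_lip: "c \<le> d \<Longrightarrow> \<bar>clamp c d x - clamp c d y\<bar> \<le> \<bar>x - y\<bar>"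
  unfolding clamp_def by (auto simp: max_def min_def abs_if)

lemma clamp_comp: "a \<le> c \<Longrightarrow> c \<le> d \<Longrightarrow> d \<le> b \<Longrightarrow> clamp c d (clamp a b z) = clamp c d z"
  unfolding clamp_def by (auto simp: max_def min_def)

lemma clamp_bnd: "\<bar>clamp a b z\<bar> \<le> \<bar>a\<bar> + \<bar>b\<bar>"
  unfolding clamp_def by auto

lemma vr_clamp_sub:
  assumes "a \<le> c" "c \<le> d" "d \<le> b"
  shows "vr std_normal (clamp c d) \<le> vr std_normal (clamp a b)"
proof -
  interpret prob_space std_normal by (rule std_normal_prob)
  define m where "m = integral\<^sup>L std_normal (clamp a b)"
  have "vr std_normal (clamp c d) \<le> integral\<^sup>L std_normal (\<lambda>z. (clamp c d z - clamp c d m)\<^sup>2)"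
    by (rule vr_le_shift[OF clamp_meas clamp_bnd])
  also have "\<dots> = integral\<^sup>L std_normal (\<lambda>z. (clamp c d (clamp a b z) - clamp c d m)\<^sup>2)"
    using clamp_comp[OF assms] by simp
  also have "\<dots> \<le> integral\<^sup>L std_normal (\<lambda>z. (clamp a b z - m)\<^sup>2)"
  proof (rule integral_mono)
    have b1: "\<bar>(clamp c d (clamp a b z) - clamp c d m)\<^sup>2\<bar> \<le> (2 * (\<bar>c\<bar> + \<bar>d\<bar>))\<^sup>2" for z
    proof (rule sq_bounded')
      have "\<bar>clamp c d (clamp a b z) - clamp c d m\<bar> \<le> \<bar>clamp c d (clamp a b z)\<bar> + \<bar>clamp c d m\<bar>"
        by (rule abs_triangle_ineq4)
      then show "\<bar>clamp c d (clamp a b z) - clamp c d m\<bar> \<le> 2 * (\<bar>c\<bar> + \<bar>d\<bar>)"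
        using clamp_bnd[of c d "clamp a b z"] clamp_bnd[of c d m] by argo
    qed
    show "integrable std_normal (\<lambda>z. (clamp c d (clamp a b z) - clamp c d m)\<^sup>2)"
      by (rule int_bounded(1)[OF _ b1]) simp
    have b2: "\<bar>(clamp a b z - m)\<^sup>2\<bar> \<le> (\<bar>a\<bar> + \<bar>b\<bar> + \<bar>m\<bar>)\<^sup>2" for z
    proof (rule sq_bounded')
      have "\<bar>clamp a b z - m\<bar> \<le> \<bar>clamp a b z\<bar> + \<bar>m\<bar>"
        by (rule abs_triangle_ineq4)
      then show "\<bar>clamp a b z - m\<bar> \<le> \<bar>a\<bar> + \<bar>b\<bar> + \<bar>m\<bar>"
        using clamp_bnd[of a b z] by linarith
    qed
    show "integrable std_normal (\<lambda>z. (clamp a b z - m)\<^sup>2)"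
      by (rule int_bounded(1)[OF _ b2]) simp
    fix z
    have "\<bar>clamp c d (clamp a b z) - clamp c d m\<bar> \<le> \<bar>clamp a b z - m\<bar>"
      by (rule clamp_lip) (rule assms(2))
    then show "(clamp c d (clamp a b z) - clamp c d m)\<^sup>2 \<le> (clamp a b z - m)\<^sup>2"
      by (simp add: abs_le_square_iff)
  qed
  also have "\<dots> = vr std_normal (clamp a b)"
    using vr_shift[OF clamp_meas clamp_bnd, of a b m] m_def by simp
  finally show ?thesis .
qed

lemma vr_clamp: "a \<le> b \<Longrightarrow> vr std_normal (clamp a b) = Vf a b"
  unfolding vr_def Vf_def using E_clamp E_clamp2 by simp

lemma g_eq:
  assumes "0 \<le> L"
  shows "g L 0 = Vf 0 L"
proof -
  have c: "(\<lambda>z. max 0 (min L z)) = clamp 0 L" by (simp add: clamp_def fun_eq_iff)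
  have "g L 0 = integral\<^sup>L std_normal (\<lambda>z. (clamp 0 L z - integral\<^sup>L std_normal (clamp 0 L))\<^sup>2)"
    unfolding g_def Let_def c ..
  also have "\<dots> = vr std_normal (clamp 0 L)"
    using vr_shift[OF clamp_meas clamp_bnd, of 0 L] by simp
  finally show ?thesis using vr_clamp assms by simp
qed

lemma vr_affine:
  assumes [measurable]: "f \<in> borel_measurable borel" and b: "\<And>z. \<bar>f z\<bar> \<le> K"
  shows "vr std_normal (\<lambda>z. m + s * f z) = s\<^sup>2 * vr std_normal f"
proof -
  interpret prob_space std_normal by (rule std_normal_prob)
  have i1: "integrable std_normal f" by (rule int_bounded(1)[OF assms])
  have i2: "integrable std_normal (\<lambda>z. (f z)\<^sup>2)" by (rule int_bounded(1)[OF _ sq_bounded[OF b]]) simp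
  have e1: "integral\<^sup>L std_normal (\<lambda>z. m + s * f z) = m + s * integral\<^sup>L std_normal f"
    using i1 by (simp add: prob_space)
  have "(\<lambda>z. (m + s * f z)\<^sup>2) = (\<lambda>z. m\<^sup>2 + 2 * m * s * f z + s\<^sup>2 * (f z)\<^sup>2)"
    by (simp add: power2_eq_square algebra_simps)
  then have e2: "integral\<^sup>L std_normal (\<lambda>z. (m + s * f z)\<^sup>2) = m\<^sup>2 + 2 * m * s * integral\<^sup>L std_normal f + s\<^sup>2 * integral\<^sup>L std_normal (\<lambda>z. (f z)\<^sup>2)"
    using i1 i2 by (simp add: prob_space)
  show ?thesis unfolding vr_def e1 e2 by (simp add: power2_eq_square algebra_simps)
qed

lemma change_std:
  fixes f :: "real \<Rightarrow> real"
  assumes "\<sigma> > 0" and [measurable]: "f \<in> borel_measurable borel"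
  shows "integral\<^sup>L (density lborel (normal_density 0 \<sigma>)) f = integral\<^sup>L std_normal (\<lambda>z. f (\<sigma> * z))"
proof -
  have nd: "\<sigma> * normal_density 0 \<sigma> (\<sigma> * z) = phi z" for z
    using assms(1) by (simp add: normal_density_def real_sqrt_mult field_simps power2_eq_square)
  have "integral\<^sup>L (density lborel (normal_density 0 \<sigma>)) f = (\<integral>y. normal_density 0 \<sigma> y * f y \<partial>lborel)"
    by (subst integral_density) auto
  also have "\<dots> = \<bar>\<sigma>\<bar> *\<^sub>R (\<integral>z. normal_density 0 \<sigma> (0 + \<sigma> * z) * f (0 + \<sigma> * z) \<partial>lborel)"
    by (rule lborel_integral_real_affine) (use assms in auto)
  also have "\<dots> = (\<integral>z. \<sigma> * normal_density 0 \<sigma> (\<sigma> * z) * f (\<sigma> * z) \<partial>lborel)"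
    using assms(1) by (simp add: mult.assoc)
  also have "\<dots> = (\<integral>z. phi z * f (\<sigma> * z) \<partial>lborel)" using nd by simp
  also have "\<dots> = integral\<^sup>L std_normal (\<lambda>z. f (\<sigma> * z))"
    unfolding std_normal_def by (subst integral_density) auto
  finally show ?thesis .
qed


lemma clamp_affine:
  assumes "\<sigma> > 0" "0 \<le> q"
  shows "clamp (- q) q (m + \<sigma> * z) = m + \<sigma> * clamp ((- q - m) / \<sigma>) ((q - m) / \<sigma>) z"
proof -
  define a where "a = (- q - m) / \<sigma>"
  define b where "b = (q - m) / \<sigma>"
  have 1: "m + \<sigma> * a = - q" "m + \<sigma> * b = q" using assms unfolding a_def b_def by simp_all
  have ia: "z \<le> a \<longleftrightarrow> m + \<sigma> * z \<le> - q" using assms unfolding a_def by (simp add: field_simps)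
  have ib: "z \<le> b \<longleftrightarrow> m + \<sigma> * z \<le> q" using assms unfolding b_def by (simp add: field_simps)
  have ab: "a \<le> b" using assms unfolding a_def b_def by (simp add: divide_right_mono)
  consider "z \<le> a" | "a < z" "z \<le> b" | "b < z" by linarith
  then have "clamp (- q) q (m + \<sigma> * z) = m + \<sigma> * clamp a b z"
  proof cases
    case 1
    then have "clamp a b z = a" unfolding clamp_def using ab by simp
    moreover have "clamp (- q) q (m + \<sigma> * z) = - q" unfolding clamp_def using 1 ia assms by simp
    ultimately show ?thesis using \<open>m + \<sigma> * a = - q\<close> by simp
  next
    case 2
    then have "clamp a b z = z" unfolding clamp_def by simp
    moreover have "clamp (- q) q (m + \<sigma> * z) = m + \<sigma> * z" unfolding clamp_def using 2 ia ib by simp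
    ultimately show ?thesis by simp
  next
    case 3
    then have "clamp a b z = b" unfolding clamp_def using ab by simp
    moreover have "clamp (- q) q (m + \<sigma> * z) = q" unfolding clamp_def using 3 ib assms by simp
    ultimately show ?thesis using \<open>m + \<sigma> * b = q\<close> by simp
  qed
  then show ?thesis unfolding a_def b_def .
qed

lemma coord_bound:
  assumes s: "\<sigma> > 0" and qj: "qj > 0" and mu: "\<bar>mu\<bar> \<le> qj" and qm: "0 < qm" "qm \<le> qj"
  shows "g (2 * qm / \<sigma>) 0 * \<sigma>\<^sup>2 \<le> vr (density lborel (normal_density 0 \<sigma>)) (\<lambda>y. clamp (- qj) qj (mu + y))"
proof -
  define a where "a = (- qj - mu) / \<sigma>"
  define b where "b = (qj - mu) / \<sigma>"
  define \<beta> where "\<beta> = 2 * qm / \<sigma>"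
  define F where "F y = clamp (- qj) qj (mu + y)" for y
  have Fm[measurable]: "F \<in> borel_measurable borel" unfolding F_def by measurable
  have "vr (density lborel (normal_density 0 \<sigma>)) F = vr std_normal (\<lambda>z. F (\<sigma> * z))"
    unfolding vr_def using change_std[OF s Fm] change_std[OF s, of "\<lambda>y. (F y)\<^sup>2"] by simp
  also have "(\<lambda>z. F (\<sigma> * z)) = (\<lambda>z. mu + \<sigma> * clamp a b z)"
    unfolding F_def a_def b_def using clamp_affine[OF s] qj by simp
  also have "vr std_normal (\<lambda>z. mu + \<sigma> * clamp a b z) = \<sigma>\<^sup>2 * vr std_normal (clamp a b)"
    by (rule vr_affine[OF clamp_meas clamp_bnd])
  finally have e: "vr (density lborel (normal_density 0 \<sigma>)) F = \<sigma>\<^sup>2 * vr std_normal (clamp a b)" .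
  define c where "c = max a (- \<beta>)"
  have a0: "a \<le> 0" unfolding a_def using s mu by (simp add: divide_nonpos_pos)
  have b0: "0 \<le> b" unfolding b_def using s mu by simp
  have ba: "a + \<beta> \<le> b" unfolding a_def b_def \<beta>_def using s qm by (simp add: field_simps)
  have bpos: "0 \<le> \<beta>" unfolding \<beta>_def using s qm by simp
  have c1: "a \<le> c" "c \<le> c + \<beta>" "c + \<beta> \<le> b" "- \<beta> \<le> c" "c \<le> 0"
    unfolding c_def using a0 b0 ba bpos by auto
  have "g \<beta> 0 = Vf 0 \<beta>" by (rule g_eq[OF bpos])
  also have "\<dots> \<le> Vf c (c + \<beta>)" by (rule core_ineq[OF bpos c1(4) c1(5)])
  also have "\<dots> = vr std_normal (clamp c (c + \<beta>))" using vr_clamp c1 by simp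
  also have "\<dots> \<le> vr std_normal (clamp a b)" by (rule vr_clamp_sub[OF c1(1-3)])
  finally have "g \<beta> 0 * \<sigma>\<^sup>2 \<le> vr std_normal (clamp a b) * \<sigma>\<^sup>2" by (rule mult_right_mono) simp
  then have "g \<beta> 0 * \<sigma>\<^sup>2 \<le> \<sigma>\<^sup>2 * vr std_normal (clamp a b)" by (simp add: mult.commute)
  then show ?thesis using e unfolding F_def \<beta>_def by simp
qed



lemma ctx_clamp: "q j > 0 \<Longrightarrow> ctx q \<mu> e j = clamp (- q j) (q j) (\<mu> j + e j)"
  unfolding ctx_def clamp_def by (auto simp: max_def min_def)

lemma prod_integral_gauss:
  fixes f :: "'n::finite \<Rightarrow> real \<Rightarrow> real"
  assumes "\<sigma> > 0" "\<And>j. integrable (density lborel (normal_density 0 \<sigma>)) (f j)"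
  shows "(LINT e|gauss_vec \<sigma>. (\<Prod>j\<in>UNIV. f j (e j))) = (\<Prod>j\<in>UNIV. integral\<^sup>L (density lborel (normal_density 0 \<sigma>)) (f j))"
proof -
  define N where "N = density lborel (normal_density 0 \<sigma>)"
  interpret N: prob_space N unfolding N_def by (rule prob_space_normal_density) (rule assms(1))
  interpret P: product_prob_space "\<lambda>_::'n. N" UNIV
    by (intro product_prob_space.intro product_sigma_finite.intro product_prob_space_axioms.intro)
       (simp_all add: N.sigma_finite_measure_axioms N.prob_space_axioms)
  show ?thesis unfolding gauss_vec_def N_def[symmetric]
    by (rule P.product_integral_prod) (use assms in \<open>auto simp: N_def\<close>)
qed


lemma quad_form:
  fixes A :: "real^'n^'n" and v :: "real^'n"
  assumes "\<And>i k. A $ i $ k = m i * m k + (if i = k then d i else 0)"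
  shows "v \<bullet> (A *v v) = (\<Sum>i\<in>UNIV. v $ i * m i)\<^sup>2 + (\<Sum>i\<in>UNIV. (v $ i)\<^sup>2 * d i)"
proof -
  have "v \<bullet> (A *v v) = (\<Sum>i\<in>UNIV. v $ i * (\<Sum>k\<in>UNIV. (m i * m k + (if i = k then d i else 0)) * v $ k))"
    by (simp add: inner_vec_def matrix_vector_mult_def assms)
  also have "\<dots> = (\<Sum>i\<in>UNIV. (v $ i * m i) * (\<Sum>k\<in>UNIV. v $ k * m k) + (v $ i)\<^sup>2 * d i)"
  proof (rule sum.cong[OF refl])
    fix i
    have "(\<Sum>k\<in>UNIV. (m i * m k + (if i = k then d i else 0)) * v $ k)
        = (\<Sum>k\<in>UNIV. m i * (v $ k * m k) + (if i = k then d i * v $ k else 0))"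
      by (rule sum.cong) (auto simp: algebra_simps)
    also have "\<dots> = (\<Sum>k\<in>UNIV. m i * (v $ k * m k)) + (\<Sum>k\<in>UNIV. (if i = k then d i * v $ k else 0))"
      by (rule sum.distrib)
    also have "\<dots> = m i * (\<Sum>k\<in>UNIV. v $ k * m k) + d i * v $ i"
      by (simp add: sum_distrib_left)
    finally show "v $ i * (\<Sum>k\<in>UNIV. (m i * m k + (if i = k then d i else 0)) * v $ k)
        = (v $ i * m i) * (\<Sum>k\<in>UNIV. v $ k * m k) + (v $ i)\<^sup>2 * d i"
      by (simp add: algebra_simps power2_eq_square)
  qed
  also have "\<dots> = (\<Sum>i\<in>UNIV. v $ i * m i)\<^sup>2 + (\<Sum>i\<in>UNIV. (v $ i)\<^sup>2 * d i)"
    by (simp add: sum.distrib power2_eq_square sum_distrib_right)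
  finally show ?thesis .
qed

theorem lemma1:
  fixes \<sigma>1 :: real and q \<mu> :: "'n::finite \<Rightarrow> real"
  assumes "\<sigma>1 > 0"
    and "\<And>j. q j > 0"
    and "\<And>j. \<bar>\<mu> j\<bar> \<le> q j"
  shows "lambda_min (\<chi> i k. LINT e|gauss_vec \<sigma>1. ctx q \<mu> e i * ctx q \<mu> e k)
           \<ge> g (2 * Min (range q) / \<sigma>1) 0 * \<sigma>1\<^sup>2"
proof -
  define N where "N = density lborel (normal_density 0 \<sigma>1)"
  interpret N: prob_space N unfolding N_def by (rule prob_space_normal_density) (rule assms(1))
  define X where "X j y = clamp (- q j) (q j) (\<mu> j + y)" for j y
  define m where "m j = integral\<^sup>L N (X j)" for j
  define s where "s j = integral\<^sup>L N (\<lambda>y. (X j y)\<^sup>2)" for j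
  define A where "A = (\<chi> i k. LINT e|gauss_vec \<sigma>1. ctx q \<mu> e i * ctx q \<mu> e k)"
  define l where "l = g (2 * Min (range q) / \<sigma>1) 0 * \<sigma>1\<^sup>2"
  have Xm[measurable]: "X j \<in> borel_measurable borel" for j unfolding X_def by measurable
  have Xb: "\<bar>X j y\<bar> \<le> 2 * \<bar>q j\<bar>" for j y
    unfolding X_def using clamp_bnd[of "- q j" "q j" "\<mu> j + y"] by simp
  have intX: "integrable N (X j)" for j
    by (rule N.integrable_const_bound[where B = "2 * \<bar>q j\<bar>"]) (auto intro!: AE_I2 simp: Xb N_def)
  have intX2: "integrable N (\<lambda>y. (X j y)\<^sup>2)" for j
  proof (rule N.integrable_const_bound[where B = "(2 * \<bar>q j\<bar>)\<^sup>2"])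
    have "\<bar>(X j y)\<^sup>2\<bar> \<le> (2 * \<bar>q j\<bar>)\<^sup>2" for y by (rule sq_bounded'[OF Xb])
    then show "AE y in N. norm ((X j y)\<^sup>2) \<le> (2 * \<bar>q j\<bar>)\<^sup>2"
      by (intro AE_I2) (simp only: real_norm_def)
    show "(\<lambda>y. (X j y)\<^sup>2) \<in> borel_measurable N" by (simp add: N_def)
  qed
  have ctxX: "ctx q \<mu> e j = X j (e j)" for e j unfolding X_def by (rule ctx_clamp[of q j, OF assms(2)])
  have Aik: "A $ i $ k = m i * m k + (if i = k then s i - (m i)\<^sup>2 else 0)" for i k
  proof (cases "i = k")
    case True
    define f where "f j y = (if j = i then (X i y)\<^sup>2 else 1)" for j y
    have "A $ i $ k = (LINT e|gauss_vec \<sigma>1. (\<Prod>j\<in>UNIV. f j (e j)))"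
      unfolding A_def f_def True ctxX by (simp add: power2_eq_square)
    also have "\<dots> = (\<Prod>j\<in>UNIV. integral\<^sup>L N (f j))"
    proof -
      have "integrable N (f j)" for j by (cases "j = i") (simp_all add: f_def[abs_def] intX2)
      then show ?thesis unfolding N_def by (intro prod_integral_gauss[OF assms(1)]) (simp add: N_def)
    qed
    also have "\<dots> = (\<Prod>j\<in>UNIV. if j = i then s i else 1)"
      by (rule prod.cong) (auto simp: f_def[abs_def] s_def N.prob_space)
    also have "\<dots> = s i" by simp
    finally show ?thesis using True by (simp add: power2_eq_square)
  next
    case False
    define f where "f j y = (if j = i then X i y else 1) * (if j = k then X k y else 1)" for j y
    have "A $ i $ k = (LINT e|gauss_vec \<sigma>1. (\<Prod>j\<in>UNIV. f j (e j)))"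
      unfolding A_def f_def ctxX by (simp add: prod.distrib)
    also have "\<dots> = (\<Prod>j\<in>UNIV. integral\<^sup>L N (f j))"
    proof -
      have "integrable N (f j)" for j using False by (cases "j = i"; cases "j = k") (simp_all add: f_def[abs_def] intX)
      then show ?thesis unfolding N_def by (intro prod_integral_gauss[OF assms(1)]) (simp add: N_def)
    qed
    also have "\<dots> = (\<Prod>j\<in>UNIV. (if j = i then m i else 1) * (if j = k then m k else 1))"
      by (rule prod.cong) (use False in \<open>auto simp: f_def[abs_def] m_def N.prob_space\<close>)
    also have "\<dots> = m i * m k" by (simp add: prod.distrib)
    finally show ?thesis using False by simp
  qed
  have sym: "transpose A = A"
  proof -
    have "transpose A $ i $ k = A $ i $ k" for i k
      unfolding transpose_def by (simp only: vec_lambda_beta Aik) (simp add: mult.commute)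
    then show ?thesis by (simp add: vec_eq_iff)
  qed
  have fin: "finite (range q)" by simp
  have ne: "range q \<noteq> {}" by simp
  have qm: "0 < Min (range q)" "Min (range q) \<le> q j" for j
  proof -
    show "0 < Min (range q)" unfolding Min_gr_iff[OF fin ne] using assms(2) by blast
    show "Min (range q) \<le> q j" by (rule Min_le[OF fin]) simp
  qed
  have dl: "l \<le> s j - (m j)\<^sup>2" for j
  proof -
    have "l \<le> vr N (X j)"
      unfolding l_def N_def X_def by (rule coord_bound[OF assms(1) assms(2) assms(3) qm])
    then show ?thesis unfolding vr_def m_def s_def .
  qed
  have Q: "l * (v \<bullet> v) \<le> v \<bullet> (A *v v)" for v
  proof -
    have "v \<bullet> (A *v v) = (\<Sum>i\<in>UNIV. v $ i * m i)\<^sup>2 + (\<Sum>i\<in>UNIV. (v $ i)\<^sup>2 * (s i - (m i)\<^sup>2))"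
      by (rule quad_form) (rule Aik)
    also have "\<dots> \<ge> (\<Sum>i\<in>UNIV. (v $ i)\<^sup>2 * (s i - (m i)\<^sup>2))" by simp
    also have "(\<Sum>i\<in>UNIV. (v $ i)\<^sup>2 * (s i - (m i)\<^sup>2)) \<ge> (\<Sum>i\<in>UNIV. (v $ i)\<^sup>2 * l)"
      by (rule sum_mono) (simp add: mult_left_mono dl)
    also have "(\<Sum>i\<in>UNIV. (v $ i)\<^sup>2 * l) = l * (v \<bullet> v)"
      by (simp add: inner_vec_def sum_distrib_left power2_eq_square mult_ac)
    finally show ?thesis .
  qed
  show ?thesis
    using lambda_min_ge[OF sym Q] unfolding A_def l_def .
qed

end
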